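(* Let $X_1,X_2,X_3$ be Polish spaces and let $\mu_{12},\mu_{13},\mu_{23}$ be a consistent family of probability measures on $X_i\times X_j$, with common one-dimensional marginals $\mu_1,\mu_2,\mu_3$. If $\mu_{ij}\ge\frac23\,\mu_i\otimes\mu_j$ (as measures) for all $1\le i<j\le3$, then $\Pi(\mu_{12},\mu_{13},\mu_{23})$ is nonempty.
   Context: Consistency: any two of $\mu_{12},\mu_{13},\mu_{23}$ have the same marginal on their common coordinate; $\mu_i$ denotes this common marginal on $X_i$. $\Pi(\mu_{12},\mu_{13},\mu_{23})$ is the set of probability measures on $X_1\times X_2\times X_3$ whose projection onto $X_i\times X_j$ is $\mu_{ij}$ for all $i<j$. *)

theory Defs
  imports "HOL-Probability.Probability"
begin

end

theory Submission
  imports Defs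
begin


lemma sets_pair_borel:
  fixes M :: "'a::second_countable_topology measure" and N :: "'b::second_countable_topology measure"
  assumes "sets M = sets borel" "sets N = sets borel"
  shows "sets (M \<Otimes>\<^sub>M N) = sets (borel :: ('a \<times> 'b) measure)"
  by (metis sets_pair_measure_cong[OF assms] borel_prod)

lemma space_borel_eq: "sets M = sets (borel :: 'a::topological_space measure) \<Longrightarrow> space M = UNIV"
  using sets_eq_imp_space_eq by fastforce

lemma K1:
  fixes L :: "'a::second_countable_topology measure" and N :: "'b::second_countable_topology measure"
  assumes "finite_measure L" "prob_space N" "sets L = sets borel" "sets N = sets borel" "A \<in> sets borel"
  shows "emeasure (L \<Otimes>\<^sub>M N) (A \<times> (UNIV::'b set)) = emeasure L A"
proof -
  interpret N: prob_space N by fact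
  have "UNIV = space N" using space_borel_eq[OF assms(4)] by simp
  then show ?thesis using N.emeasure_pair_measure_Times[of A L UNIV] assms N.emeasure_space_1 by simp
qed

lemma pair_scale_left:
  fixes M :: "'a measure" and N :: "'b measure"
  assumes "finite_measure M" "finite_measure N" "r \<noteq> top"
  shows "scale_measure r M \<Otimes>\<^sub>M N = scale_measure r (M \<Otimes>\<^sub>M N)"
proof (rule pair_measure_eqI)
  interpret M: finite_measure M by fact
  interpret N: finite_measure N by fact
  show "sigma_finite_measure (scale_measure r M)"
    by (rule finite_measure.sigma_finite_measure, rule finite_measureI)
       (simp add: space_scale_measure assms ennreal_mult_eq_top_iff)
  show "sigma_finite_measure N" ..
  show "sets (scale_measure r M \<Otimes>\<^sub>M N) = sets (scale_measure r (M \<Otimes>\<^sub>M N))"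
    by (simp add: sets_pair_measure_cong[of "scale_measure r M" M N N])
  fix A B assume "A \<in> sets (scale_measure r M)" "B \<in> sets N"
  then show "emeasure (scale_measure r M) A * emeasure N B = emeasure (scale_measure r (M \<Otimes>\<^sub>M N)) (A \<times> B)"
    by (simp add: N.emeasure_pair_measure_Times mult.assoc)
qed

lemma emeasure_add3:
  assumes "sets M1 = sets K" "sets M2 = sets K" "sets M3 = sets K" "A \<in> sets K"
  shows "emeasure (measure_of (space K) (sets K) (\<lambda>A. emeasure M1 A + emeasure M2 A + emeasure M3 A)) A
     = emeasure M1 A + emeasure M2 A + emeasure M3 A"
proof (rule emeasure_measure_of_sigma)
  show "sigma_algebra (space K) (sets K)" ..
  show "positive (sets K) (\<lambda>A. emeasure M1 A + emeasure M2 A + emeasure M3 A)"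
    by (simp add: positive_def)
  show "countably_additive (sets K) (\<lambda>A. emeasure M1 A + emeasure M2 A + emeasure M3 A)"
  proof (rule countably_additiveI)
    fix A :: "nat \<Rightarrow> _" assume A: "range A \<subseteq> sets K" "disjoint_family A"
    then show "(\<Sum>i. emeasure M1 (A i) + emeasure M2 (A i) + emeasure M3 (A i)) =
      emeasure M1 (\<Union>i. A i) + emeasure M2 (\<Union>i. A i) + emeasure M3 (\<Union>i. A i)"
      using assms by (simp add: suminf_add[symmetric] suminf_emeasure)
  qed
qed fact

lemma K1r:
  fixes L :: "'a::second_countable_topology measure" and N :: "'b::second_countable_topology measure"
  assumes "prob_space N" "finite_measure L" "sets L = sets borel" "sets N = sets borel" "A \<in> sets borel"
  shows "emeasure (N \<Otimes>\<^sub>M L) ((UNIV::'b set) \<times> A) = emeasure L A"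
proof -
  interpret N: prob_space N by fact
  interpret L: finite_measure L by fact
  have "UNIV = space N" using space_borel_eq[OF assms(4)] by simp
  then show ?thesis using L.emeasure_pair_measure_Times[of UNIV N A] assms N.emeasure_space_1 by simp
qed

lemma cont_meas:
  fixes f :: "'a::topological_space \<Rightarrow> 'b::topological_space"
  assumes "continuous_on UNIV f" "sets M = sets borel"
  shows "f \<in> measurable M borel"
  by (subst measurable_cong_sets[OF assms(2) refl]) (rule borel_measurable_continuous_onI[OF assms(1)])

lemma test1: "continuous_on UNIV (\<lambda>(x::'a::topological_space,y::'b::topological_space,z::'c::topological_space). (x,y))"
  "continuous_on UNIV (\<lambda>(x::'a::topological_space,y::'b::topological_space,z::'c::topological_space). (x,z))"
  "continuous_on UNIV (\<lambda>(x::'a::topological_space,y::'b::topological_space,z::'c::topological_space). (y,z))"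
  "continuous_on UNIV (\<lambda>((x::'a::topological_space,y::'b::topological_space),z::'c::topological_space). (x,y,z))"
  "continuous_on UNIV (\<lambda>((x::'a::topological_space,z::'c::topological_space),y::'b::topological_space). (x,y,z))"
  "continuous_on UNIV (\<lambda>((y::'b::topological_space,z::'c::topological_space),x::'a::topological_space). (x,y,z))"
  "continuous_on UNIV (\<lambda>(a::'a::topological_space,b::'b::topological_space). (b,a))"
  by (simp_all add: split_beta' continuous_intros)

lemma K2:
  fixes L :: "'p::second_countable_topology measure" and N :: "'q::second_countable_topology measure"
    and M :: "'u::second_countable_topology measure"
  assumes L: "finite_measure L" and N: "prob_space N" and sL: "sets L = sets borel" and sN: "sets N = sets borel"
    and g: "g \<in> measurable L borel"
    and dg: "distr L borel g = scale_measure r M" and M: "finite_measure M" and r: "r \<noteq> top"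
    and A: "A \<in> sets (borel :: ('u \<times> 'q) measure)"
  shows "emeasure (L \<Otimes>\<^sub>M N) {(p,z). (g p, z) \<in> A} = r * emeasure (M \<Otimes>\<^sub>M N) A"
proof -
  interpret N: prob_space N by fact
  have dN: "distr N borel (\<lambda>x. x) = N" using distr_id2[of borel N] sN by simp
  have sf: "sigma_finite_measure (distr N borel (\<lambda>x. x))" unfolding dN ..
  have eq: "distr L borel g \<Otimes>\<^sub>M distr N borel (\<lambda>x. x) =
     distr (L \<Otimes>\<^sub>M N) (borel \<Otimes>\<^sub>M borel) (\<lambda>(x, y). (g x, y))"
    using pair_measure_distr[OF g measurable_ident_sets[OF sN] sf] by simp
  have h: "(\<lambda>(x, y). (g x, y)) \<in> measurable (L \<Otimes>\<^sub>M N) (borel \<Otimes>\<^sub>M borel)"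
  proof -
    have "(\<lambda>x. (g (fst x), snd x)) \<in> measurable (L \<Otimes>\<^sub>M N) (borel \<Otimes>\<^sub>M borel)"
      using g measurable_ident_sets[OF sN] by measurable
    then show ?thesis by (simp add: split_beta')
  qed
  have A': "A \<in> sets (borel \<Otimes>\<^sub>M borel)" unfolding borel_prod using A .
  have sp: "space (L \<Otimes>\<^sub>M N) = UNIV"
    by (simp add: space_pair_measure space_borel_eq[OF sL] space_borel_eq[OF sN])
  have "r * emeasure (M \<Otimes>\<^sub>M N) A = emeasure (scale_measure r M \<Otimes>\<^sub>M N) A"
    using pair_scale_left[OF M N.finite_measure_axioms r] by simp
  also have "\<dots> = emeasure (distr (L \<Otimes>\<^sub>M N) (borel \<Otimes>\<^sub>M borel) (\<lambda>(x, y). (g x, y))) A"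
    using eq dg dN by simp
  also have "\<dots> = emeasure (L \<Otimes>\<^sub>M N) ((\<lambda>(x, y). (g x, y)) -` A \<inter> space (L \<Otimes>\<^sub>M N))"
    by (rule emeasure_distr[OF h A'])
  also have "(\<lambda>(x, y). (g x, y)) -` A \<inter> space (L \<Otimes>\<^sub>M N) = {(p,z). (g p, z) \<in> A}"
    using sp by auto
  finally show ?thesis by simp
qed

lemma K3:
  fixes M :: "'a::second_countable_topology measure" and N :: "'b::second_countable_topology measure"
  assumes "finite_measure M" "finite_measure N" "sets M = sets borel" "sets N = sets borel"
    and A: "A \<in> sets (borel :: ('b \<times> 'a) measure)"
  shows "emeasure (M \<Otimes>\<^sub>M N) {(a,b). (b,a) \<in> A} = emeasure (N \<Otimes>\<^sub>M M) A"
proof -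
  interpret M: finite_measure M by fact
  interpret N: finite_measure N by fact
  interpret pair_sigma_finite N M ..
  have sp: "space (M \<Otimes>\<^sub>M N) = UNIV"
    by (simp add: space_pair_measure space_borel_eq[OF assms(3)] space_borel_eq[OF assms(4)])
  have A': "A \<in> sets (N \<Otimes>\<^sub>M M)" using A sets_pair_borel[OF assms(4,3)] by simp
  have "emeasure (N \<Otimes>\<^sub>M M) A = emeasure (distr (M \<Otimes>\<^sub>M N) (N \<Otimes>\<^sub>M M) (\<lambda>(x, y). (y, x))) A"
    using distr_pair_swap by simp
  also have "\<dots> = emeasure (M \<Otimes>\<^sub>M N) ((\<lambda>(x, y). (y, x)) -` A \<inter> space (M \<Otimes>\<^sub>M N))"
    by (rule emeasure_distr[OF measurable_pair_swap' A'])
  also have "(\<lambda>(x, y). (y, x)) -` A \<inter> space (M \<Otimes>\<^sub>M N) = {(a,b). (b,a) \<in> A}"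
    using sp by auto
  finally show ?thesis by simp
qed

lemma ennreal_third:
  assumes "(0::real) \<le> x"
  shows "ennreal x - ennreal (2/3) * ennreal x = ennreal (1/3) * ennreal x"
  using assms by (simp add: ennreal_mult[symmetric] ennreal_minus)

lemma diff_part:
  fixes \<mu> :: "('a::second_countable_topology \<times> 'b::second_countable_topology) measure"
  assumes s: "sets \<mu> = sets borel" and p: "prob_space \<mu>"
    and m1: "distr \<mu> borel fst = \<mu>a" and m2: "distr \<mu> borel snd = \<mu>b"
    and ge: "\<forall>A\<in>sets borel. ennreal (2/3) * emeasure (\<mu>a \<Otimes>\<^sub>M \<mu>b) A \<le> emeasure \<mu> A"
  defines "L \<equiv> diff_measure \<mu> (scale_measure (ennreal (2/3)) (\<mu>a \<Otimes>\<^sub>M \<mu>b))"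
  shows "sets L = sets borel" "finite_measure L"
    "\<And>A. A \<in> sets borel \<Longrightarrow> emeasure L A = ennreal (measure \<mu> A - 2/3 * measure (\<mu>a \<Otimes>\<^sub>M \<mu>b) A)"
    "emeasure L UNIV = ennreal (1/3)"
    "distr L borel fst = scale_measure (ennreal (1/3)) \<mu>a"
    "distr L borel snd = scale_measure (ennreal (1/3)) \<mu>b"
    "prob_space \<mu>a" "prob_space \<mu>b" "sets \<mu>a = sets borel" "sets \<mu>b = sets borel"
proof -
  interpret P: prob_space \<mu> by fact
  have s': "sets \<mu> = sets (borel \<Otimes>\<^sub>M borel)" unfolding borel_prod by (rule s)
  have mf: "fst \<in> measurable \<mu> borel" by (simp add: measurable_cong_sets[OF s' refl])
  have ms: "snd \<in> measurable \<mu> borel" by (simp add: measurable_cong_sets[OF s' refl])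
  show pa: "prob_space \<mu>a" using P.prob_space_distr[OF mf] m1 by simp
  show pb: "prob_space \<mu>b" using P.prob_space_distr[OF ms] m2 by simp
  show sa: "sets \<mu>a = sets borel" using m1[symmetric] by simp
  show sb: "sets \<mu>b = sets borel" using m2[symmetric] by simp
  interpret A: prob_space \<mu>a by fact
  interpret B: prob_space \<mu>b by fact
  interpret AB: pair_prob_space \<mu>a \<mu>b ..
  have sab: "sets (\<mu>a \<Otimes>\<^sub>M \<mu>b) = sets borel" by (rule sets_pair_borel[OF sa sb])
  have fs: "finite_measure (scale_measure (ennreal (2/3)) (\<mu>a \<Otimes>\<^sub>M \<mu>b))"
    by (rule finite_measureI) (simp add: space_scale_measure ennreal_mult_eq_top_iff)
  have raw: "emeasure L A = emeasure \<mu> A - ennreal (2/3) * emeasure (\<mu>a \<Otimes>\<^sub>M \<mu>b) A"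
    if A: "A \<in> sets borel" for A
    unfolding L_def
    using P.finite_measure_axioms fs s sab ge A by (subst emeasure_diff_measure) auto
  show eL: "emeasure L A = ennreal (measure \<mu> A - 2/3 * measure (\<mu>a \<Otimes>\<^sub>M \<mu>b) A)"
    if A: "A \<in> sets borel" for A
    using raw[OF A] by (simp add: P.emeasure_eq_measure AB.emeasure_eq_measure ennreal_mult[symmetric] ennreal_minus)
  show sL: "sets L = sets borel" unfolding L_def using s by simp
  have spL: "space L = UNIV" by (rule space_borel_eq[OF sL])
  show "emeasure L UNIV = ennreal (1/3)"
    using eL[of UNIV] P.prob_space AB.prob_space space_borel_eq[OF s] space_borel_eq[OF sab] by simp
  then show fL: "finite_measure L" by (intro finite_measureI) (simp add: spL)
  have mfL: "fst \<in> measurable L borel" by (subst measurable_cong_sets[OF sL[unfolded s[symmetric]] refl]) (rule mf)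
  have msL: "snd \<in> measurable L borel" by (subst measurable_cong_sets[OF sL[unfolded s[symmetric]] refl]) (rule ms)
  show "distr L borel fst = scale_measure (ennreal (1/3)) \<mu>a"
  proof (rule measure_eqI)
    show "sets (distr L borel fst) = sets (scale_measure (ennreal (1/3)) \<mu>a)" using sa by simp
    fix A assume "A \<in> sets (distr L borel fst)"
    then have A: "A \<in> sets borel" by simp
    have AU: "A \<times> (UNIV::'b set) \<in> sets borel" using measurable_sets[OF mfL A] spL sL by (simp add: vimage_fst)
    have e1: "emeasure \<mu> (A \<times> (UNIV::'b set)) = emeasure \<mu>a A"
      using emeasure_distr[OF mf A] m1 space_borel_eq[OF s] by (simp add: vimage_fst)
    have e2: "emeasure (\<mu>a \<Otimes>\<^sub>M \<mu>b) (A \<times> (UNIV::'b set)) = emeasure \<mu>a A"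
      by (rule K1[OF A.finite_measure_axioms pb sa sb A])
    have "emeasure (distr L borel fst) A = emeasure L (A \<times> (UNIV::'b set))"
      using emeasure_distr[OF mfL A] spL by (simp add: vimage_fst)
    also have "\<dots> = emeasure \<mu>a A - ennreal (2/3) * emeasure \<mu>a A"
      using raw[OF AU] e1 e2 by simp
    also have "\<dots> = ennreal (1/3) * emeasure \<mu>a A"
      by (simp add: A.emeasure_eq_measure ennreal_third)
    finally show "emeasure (distr L borel fst) A = emeasure (scale_measure (ennreal (1/3)) \<mu>a) A" by simp
  qed
  show "distr L borel snd = scale_measure (ennreal (1/3)) \<mu>b"
  proof (rule measure_eqI)
    show "sets (distr L borel snd) = sets (scale_measure (ennreal (1/3)) \<mu>b)" using sb by simp
    fix A assume "A \<in> sets (distr L borel snd)"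
    then have A: "A \<in> sets borel" by simp
    have AU: "(UNIV::'a set) \<times> A \<in> sets borel" using measurable_sets[OF msL A] spL sL by (simp add: vimage_snd)
    have e1: "emeasure \<mu> ((UNIV::'a set) \<times> A) = emeasure \<mu>b A"
      using emeasure_distr[OF ms A] m2 space_borel_eq[OF s] by (simp add: vimage_snd)
    have e2: "emeasure (\<mu>a \<Otimes>\<^sub>M \<mu>b) ((UNIV::'a set) \<times> A) = emeasure \<mu>b A"
      by (rule K1r[OF pa B.finite_measure_axioms sb sa A])
    have "emeasure (distr L borel snd) A = emeasure L ((UNIV::'a set) \<times> A)"
      using emeasure_distr[OF msL A] spL by (simp add: vimage_snd)
    also have "\<dots> = emeasure \<mu>b A - ennreal (2/3) * emeasure \<mu>b A"
      using raw[OF AU] e1 e2 by simp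
    also have "\<dots> = ennreal (1/3) * emeasure \<mu>b A"
      by (simp add: B.emeasure_eq_measure ennreal_third)
    finally show "emeasure (distr L borel snd) A = emeasure (scale_measure (ennreal (1/3)) \<mu>b) A" by simp
  qed
qed


lemma arith3:
  fixes m p :: real
  assumes "0 \<le> p" "0 \<le> m" "ennreal (2/3) * ennreal p \<le> ennreal m"
  shows "ennreal (m - 2/3*p) + ennreal (1/3) * ennreal p + ennreal (1/3) * ennreal p = ennreal m"
    "ennreal (1/3) * ennreal p + ennreal (m - 2/3*p) + ennreal (1/3) * ennreal p = ennreal m"
    "ennreal (1/3) * ennreal p + ennreal (1/3) * ennreal p + ennreal (m - 2/3*p) = ennreal m"
proof -
  have le: "2/3*p \<le> m" using assms by (simp add: ennreal_mult[symmetric] ennreal_le_iff)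
  have c: "ennreal (1/3) * ennreal p = ennreal (p/3)" by (subst ennreal_mult[symmetric]) (use assms in auto)
  have "ennreal (m - 2/3*p) + ennreal (p/3) + ennreal (p/3) = ennreal (m - 2/3*p + p/3 + p/3)"
    using le assms by (simp add: ennreal_plus[symmetric] del: ennreal_plus)
  also have "\<dots> = ennreal m" by simp
  finally show "ennreal (m - 2/3*p) + ennreal (1/3) * ennreal p + ennreal (1/3) * ennreal p = ennreal m"
    unfolding c .
  then show "ennreal (1/3) * ennreal p + ennreal (m - 2/3*p) + ennreal (1/3) * ennreal p = ennreal m"
    "ennreal (1/3) * ennreal p + ennreal (1/3) * ennreal p + ennreal (m - 2/3*p) = ennreal m"
    by (simp_all add: ac_simps)
qed

lemma one3: "ennreal (1/3) + ennreal (1/3) + ennreal (1/3) = 1"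
proof -
  have "ennreal (1/3) + ennreal (1/3) + ennreal (1/3) = ennreal (1/3+1/3+1/3)"
    by (simp add: ennreal_plus[symmetric] del: ennreal_plus)
  also have "\<dots> = 1" by simp
  finally show ?thesis .
qed

lemma fs_meas:
  fixes L :: "('a::second_countable_topology \<times> 'b::second_countable_topology) measure"
  assumes "sets L = sets borel"
  shows "fst \<in> measurable L borel \<and> snd \<in> measurable L borel"
proof -
  have s': "sets L = sets (borel \<Otimes>\<^sub>M borel)" unfolding borel_prod by (rule assms)
  show ?thesis by (simp add: measurable_cong_sets[OF s' refl])
qed


theorem mainTheorem6:
  fixes \<mu>12 :: "('a::polish_space \<times> 'b::polish_space) measure"
    and \<mu>13 :: "('a \<times> 'c::polish_space) measure"
    and \<mu>23 :: "('b \<times> 'c) measure"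
    and \<mu>1 :: "'a measure" and \<mu>2 :: "'b measure" and \<mu>3 :: "'c measure"
  assumes sets12: "sets \<mu>12 = sets borel" and prob12: "prob_space \<mu>12"
    and sets13: "sets \<mu>13 = sets borel" and prob13: "prob_space \<mu>13"
    and sets23: "sets \<mu>23 = sets borel" and prob23: "prob_space \<mu>23"
    and marg1_12: "distr \<mu>12 borel fst = \<mu>1" and marg1_13: "distr \<mu>13 borel fst = \<mu>1"
    and marg2_12: "distr \<mu>12 borel snd = \<mu>2" and marg2_23: "distr \<mu>23 borel fst = \<mu>2"
    and marg3_13: "distr \<mu>13 borel snd = \<mu>3" and marg3_23: "distr \<mu>23 borel snd = \<mu>3"
    and ge12: "\<forall>A \<in> sets borel. ennreal (2/3) * emeasure (\<mu>1 \<Otimes>\<^sub>M \<mu>2) A \<le> emeasure \<mu>12 A"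
    and ge13: "\<forall>A \<in> sets borel. ennreal (2/3) * emeasure (\<mu>1 \<Otimes>\<^sub>M \<mu>3) A \<le> emeasure \<mu>13 A"
    and ge23: "\<forall>A \<in> sets borel. ennreal (2/3) * emeasure (\<mu>2 \<Otimes>\<^sub>M \<mu>3) A \<le> emeasure \<mu>23 A"
  shows "\<exists>\<nu> :: ('a \<times> 'b \<times> 'c) measure.
           sets \<nu> = sets borel \<and> prob_space \<nu> \<and>
           distr \<nu> borel (\<lambda>(x, y, z). (x, y)) = \<mu>12 \<and>
           distr \<nu> borel (\<lambda>(x, y, z). (x, z)) = \<mu>13 \<and>
           distr \<nu> borel (\<lambda>(x, y, z). (y, z)) = \<mu>23"
  
proof -
  define L12 where "L12 = diff_measure \<mu>12 (scale_measure (ennreal (2/3)) (\<mu>1 \<Otimes>\<^sub>M \<mu>2))"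
  define L13 where "L13 = diff_measure \<mu>13 (scale_measure (ennreal (2/3)) (\<mu>1 \<Otimes>\<^sub>M \<mu>3))"
  define L23 where "L23 = diff_measure \<mu>23 (scale_measure (ennreal (2/3)) (\<mu>2 \<Otimes>\<^sub>M \<mu>3))"
  note D12 = diff_part[OF sets12 prob12 marg1_12 marg2_12 ge12, folded L12_def]
  note D13 = diff_part[OF sets13 prob13 marg1_13 marg3_13 ge13, folded L13_def]
  note D23 = diff_part[OF sets23 prob23 marg2_23 marg3_23 ge23, folded L23_def]
  interpret P1: prob_space \<mu>1 by (rule D12(7))
  interpret P2: prob_space \<mu>2 by (rule D12(8))
  interpret P3: prob_space \<mu>3 by (rule D13(8))
  interpret P12: prob_space \<mu>12 by (rule prob12)
  interpret P13: prob_space \<mu>13 by (rule prob13)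
  interpret P23: prob_space \<mu>23 by (rule prob23)
  interpret Q12: pair_prob_space \<mu>1 \<mu>2 ..
  interpret Q13: pair_prob_space \<mu>1 \<mu>3 ..
  interpret Q23: pair_prob_space \<mu>2 \<mu>3 ..
  have s1: "sets \<mu>1 = sets borel" by (rule D12(9))
  have s2: "sets \<mu>2 = sets borel" by (rule D12(10))
  have s3: "sets \<mu>3 = sets borel" by (rule D13(10))
  define f1 :: "('a \<times> 'b) \<times> 'c \<Rightarrow> 'a \<times> 'b \<times> 'c" where "f1 = (\<lambda>((x,y),z). (x,y,z))"
  define f2 :: "('a \<times> 'c) \<times> 'b \<Rightarrow> 'a \<times> 'b \<times> 'c" where "f2 = (\<lambda>((x,z),y). (x,y,z))"
  define f3 :: "('b \<times> 'c) \<times> 'a \<Rightarrow> 'a \<times> 'b \<times> 'c" where "f3 = (\<lambda>((y,z),x). (x,y,z))"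
  define T1 where "T1 = distr (L12 \<Otimes>\<^sub>M \<mu>3) borel f1"
  define T2 where "T2 = distr (L13 \<Otimes>\<^sub>M \<mu>2) borel f2"
  define T3 where "T3 = distr (L23 \<Otimes>\<^sub>M \<mu>1) borel f3"
  define \<nu> :: "('a \<times> 'b \<times> 'c) measure" where
    "\<nu> = measure_of (space borel) (sets borel) (\<lambda>A. emeasure T1 A + emeasure T2 A + emeasure T3 A)"
  have sP1: "sets (L12 \<Otimes>\<^sub>M \<mu>3) = sets borel" by (rule sets_pair_borel[OF D12(1) s3])
  have sP2: "sets (L13 \<Otimes>\<^sub>M \<mu>2) = sets borel" by (rule sets_pair_borel[OF D13(1) s2])
  have sP3: "sets (L23 \<Otimes>\<^sub>M \<mu>1) = sets borel" by (rule sets_pair_borel[OF D23(1) s1])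
  have spP1: "space (L12 \<Otimes>\<^sub>M \<mu>3) = UNIV" by (rule space_borel_eq[OF sP1])
  have spP2: "space (L13 \<Otimes>\<^sub>M \<mu>2) = UNIV" by (rule space_borel_eq[OF sP2])
  have spP3: "space (L23 \<Otimes>\<^sub>M \<mu>1) = UNIV" by (rule space_borel_eq[OF sP3])
  have mf1: "f1 \<in> measurable (L12 \<Otimes>\<^sub>M \<mu>3) borel" unfolding f1_def by (rule cont_meas[OF test1(4) sP1])
  have mf2: "f2 \<in> measurable (L13 \<Otimes>\<^sub>M \<mu>2) borel" unfolding f2_def by (rule cont_meas[OF test1(5) sP2])
  have mf3: "f3 \<in> measurable (L23 \<Otimes>\<^sub>M \<mu>1) borel" unfolding f3_def by (rule cont_meas[OF test1(6) sP3])
  have eT1: "emeasure T1 S = emeasure (L12 \<Otimes>\<^sub>M \<mu>3) (f1 -` S)" if "S \<in> sets borel" for S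
    unfolding T1_def using emeasure_distr[OF mf1 that] spP1 by simp
  have eT2: "emeasure T2 S = emeasure (L13 \<Otimes>\<^sub>M \<mu>2) (f2 -` S)" if "S \<in> sets borel" for S
    unfolding T2_def using emeasure_distr[OF mf2 that] spP2 by simp
  have eT3: "emeasure T3 S = emeasure (L23 \<Otimes>\<^sub>M \<mu>1) (f3 -` S)" if "S \<in> sets borel" for S
    unfolding T3_def using emeasure_distr[OF mf3 that] spP3 by simp
  have e\<nu>: "emeasure \<nu> S = emeasure T1 S + emeasure T2 S + emeasure T3 S" if "S \<in> sets borel" for S
    unfolding \<nu>_def by (rule emeasure_add3) (auto simp: T1_def T2_def T3_def that)
  have s\<nu>: "sets \<nu> = sets borel" unfolding \<nu>_def using sets.sigma_sets_eq[of borel] by simp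
  have sp\<nu>: "space \<nu> = UNIV" by (rule space_borel_eq[OF s\<nu>])
  have fin12: "finite_measure L12" by (rule D12(2))
  have fin13: "finite_measure L13" by (rule D13(2))
  have fin23: "finite_measure L23" by (rule D23(2))
  have prob\<nu>: "prob_space \<nu>"
  proof (rule prob_spaceI)
    have u1: "f1 -` UNIV = UNIV \<times> UNIV" "f2 -` UNIV = UNIV \<times> UNIV" "f3 -` UNIV = UNIV \<times> UNIV" by auto
    have "emeasure \<nu> (space \<nu>) = ennreal (1/3) + ennreal (1/3) + ennreal (1/3)"
      unfolding sp\<nu> e\<nu>[OF sets.top[of borel, unfolded space_borel]] eT1[OF sets.top[of borel, unfolded space_borel]]
        eT2[OF sets.top[of borel, unfolded space_borel]] eT3[OF sets.top[of borel, unfolded space_borel]] u1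
      using K1[OF fin12 P3.prob_space_axioms D12(1) s3 sets.top[of borel, unfolded space_borel]]
        K1[OF fin13 P2.prob_space_axioms D13(1) s2 sets.top[of borel, unfolded space_borel]]
        K1[OF fin23 P1.prob_space_axioms D23(1) s1 sets.top[of borel, unfolded space_borel]]
        D12(4) D13(4) D23(4) by simp
    then show "emeasure \<nu> (space \<nu>) = 1" using one3 by simp
  qed
  have mS: "S \<in> sets borel" if "continuous_on UNIV g" "A \<in> sets borel" and S: "S = g -` A" for g :: "'x::topological_space \<Rightarrow> 'y::topological_space" and A S
    using measurable_sets[OF cont_meas[OF that(1) refl] that(2)] S by simp
  have swp: "{(a,b). (b,a) \<in> A} \<in> sets borel" if "A \<in> sets (borel :: ('x::topological_space \<times> 'y::topological_space) measure)" for A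
    by (rule mS[OF test1(7) that]) auto
  have fst12: "fst \<in> measurable L12 borel" "snd \<in> measurable L12 borel"
    using fs_meas[OF D12(1)] by auto
  have fst13: "fst \<in> measurable L13 borel" "snd \<in> measurable L13 borel"
    using fs_meas[OF D13(1)] by auto
  have fst23: "fst \<in> measurable L23 borel" "snd \<in> measurable L23 borel"
    using fs_meas[OF D23(1)] by auto
  have fm1: "finite_measure \<mu>1" "finite_measure \<mu>2" "finite_measure \<mu>3"
    using P1.finite_measure_axioms P2.finite_measure_axioms P3.finite_measure_axioms by auto
  have top3: "ennreal (1/3) \<noteq> top" by simp
  show ?thesis
  proof (intro exI[of _ \<nu>] conjI)
    show "sets \<nu> = sets borel" by (rule s\<nu>)
    show "prob_space \<nu>" by (rule prob\<nu>)
    show "distr \<nu> borel (\<lambda>(x, y, z). (x, y)) = \<mu>12"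
    proof (rule measure_eqI)
      show "sets (distr \<nu> borel (\<lambda>(x, y, z). (x, y))) = sets \<mu>12" using sets12 by simp
      fix A assume "A \<in> sets (distr \<nu> borel (\<lambda>(x, y, z). (x, y)))"
      then have A: "A \<in> sets borel" by simp
      define S :: "('a \<times> 'b \<times> 'c) set" where "S = (\<lambda>(x, y, z). (x, y)) -` A"
      have S: "S \<in> sets borel" by (rule mS[OF test1(1) A S_def])
      have "emeasure (distr \<nu> borel (\<lambda>(x, y, z). (x, y))) A = emeasure \<nu> S"
        using emeasure_distr[OF cont_meas[OF test1(1) s\<nu>] A] sp\<nu> by (simp add: S_def)
      also have "\<dots> = emeasure T1 S + emeasure T2 S + emeasure T3 S" by (rule e\<nu>[OF S])
      also have "emeasure T1 S = emeasure L12 A"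
      proof -
        have "f1 -` S = A \<times> UNIV" by (auto simp: f1_def S_def)
        then show ?thesis using eT1[OF S] K1[OF fin12 P3.prob_space_axioms D12(1) s3 A] by simp
      qed
      also have "emeasure T2 S = ennreal (1/3) * emeasure (\<mu>1 \<Otimes>\<^sub>M \<mu>2) A"
      proof -
        have "f2 -` S = {(p,z). (fst p, z) \<in> A}" by (auto simp: f2_def S_def)
        then show ?thesis using eT2[OF S] K2[OF fin13 P2.prob_space_axioms D13(1) s2 fst13(1) D13(5) fm1(1) top3 A] by simp
      qed
      also have "emeasure T3 S = ennreal (1/3) * emeasure (\<mu>1 \<Otimes>\<^sub>M \<mu>2) A"
      proof -
        have "f3 -` S = {(p,z). (fst p, z) \<in> {(a,b). (b,a) \<in> A}}" by (auto simp: f3_def S_def)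
        then show ?thesis using eT3[OF S] K2[OF fin23 P1.prob_space_axioms D23(1) s1 fst23(1) D23(5) fm1(2) top3 swp[OF A]]
            K3[OF fm1(2) fm1(1) s2 s1 A] by simp
      qed
      also have "emeasure L12 A + ennreal (1/3) * emeasure (\<mu>1 \<Otimes>\<^sub>M \<mu>2) A + ennreal (1/3) * emeasure (\<mu>1 \<Otimes>\<^sub>M \<mu>2) A = emeasure \<mu>12 A"
        unfolding D12(3)[OF A] Q12.emeasure_eq_measure P12.emeasure_eq_measure
        by (rule arith3(1)) (use ge12 A in \<open>auto simp: Q12.emeasure_eq_measure P12.emeasure_eq_measure\<close>)
      finally show "emeasure (distr \<nu> borel (\<lambda>(x, y, z). (x, y))) A = emeasure \<mu>12 A" .
    qed
    show "distr \<nu> borel (\<lambda>(x, y, z). (x, z)) = \<mu>13"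
    proof (rule measure_eqI)
      show "sets (distr \<nu> borel (\<lambda>(x, y, z). (x, z))) = sets \<mu>13" using sets13 by simp
      fix A assume "A \<in> sets (distr \<nu> borel (\<lambda>(x, y, z). (x, z)))"
      then have A: "A \<in> sets borel" by simp
      define S :: "('a \<times> 'b \<times> 'c) set" where "S = (\<lambda>(x, y, z). (x, z)) -` A"
      have S: "S \<in> sets borel" by (rule mS[OF test1(2) A S_def])
      have "emeasure (distr \<nu> borel (\<lambda>(x, y, z). (x, z))) A = emeasure \<nu> S"
        using emeasure_distr[OF cont_meas[OF test1(2) s\<nu>] A] sp\<nu> by (simp add: S_def)
      also have "\<dots> = emeasure T1 S + emeasure T2 S + emeasure T3 S" by (rule e\<nu>[OF S])
      also have "emeasure T1 S = ennreal (1/3) * emeasure (\<mu>1 \<Otimes>\<^sub>M \<mu>3) A"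
      proof -
        have "f1 -` S = {(p,z). (fst p, z) \<in> A}" by (auto simp: f1_def S_def)
        then show ?thesis using eT1[OF S] K2[OF fin12 P3.prob_space_axioms D12(1) s3 fst12(1) D12(5) fm1(1) top3 A] by simp
      qed
      also have "emeasure T2 S = emeasure L13 A"
      proof -
        have "f2 -` S = A \<times> UNIV" by (auto simp: f2_def S_def)
        then show ?thesis using eT2[OF S] K1[OF fin13 P2.prob_space_axioms D13(1) s2 A] by simp
      qed
      also have "emeasure T3 S = ennreal (1/3) * emeasure (\<mu>1 \<Otimes>\<^sub>M \<mu>3) A"
      proof -
        have "f3 -` S = {(p,z). (snd p, z) \<in> {(a,b). (b,a) \<in> A}}" by (auto simp: f3_def S_def)
        then show ?thesis using eT3[OF S] K2[OF fin23 P1.prob_space_axioms D23(1) s1 fst23(2) D23(6) fm1(3) top3 swp[OF A]]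
            K3[OF fm1(3) fm1(1) s3 s1 A] by simp
      qed
      also have "ennreal (1/3) * emeasure (\<mu>1 \<Otimes>\<^sub>M \<mu>3) A + emeasure L13 A + ennreal (1/3) * emeasure (\<mu>1 \<Otimes>\<^sub>M \<mu>3) A = emeasure \<mu>13 A"
        unfolding D13(3)[OF A] Q13.emeasure_eq_measure P13.emeasure_eq_measure
        by (rule arith3(2)) (use ge13 A in \<open>auto simp: Q13.emeasure_eq_measure P13.emeasure_eq_measure\<close>)
      finally show "emeasure (distr \<nu> borel (\<lambda>(x, y, z). (x, z))) A = emeasure \<mu>13 A" .
    qed
    show "distr \<nu> borel (\<lambda>(x, y, z). (y, z)) = \<mu>23"
    proof (rule measure_eqI)
      show "sets (distr \<nu> borel (\<lambda>(x, y, z). (y, z))) = sets \<mu>23" using sets23 by simp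
      fix A assume "A \<in> sets (distr \<nu> borel (\<lambda>(x, y, z). (y, z)))"
      then have A: "A \<in> sets borel" by simp
      define S :: "('a \<times> 'b \<times> 'c) set" where "S = (\<lambda>(x, y, z). (y, z)) -` A"
      have S: "S \<in> sets borel" by (rule mS[OF test1(3) A S_def])
      have "emeasure (distr \<nu> borel (\<lambda>(x, y, z). (y, z))) A = emeasure \<nu> S"
        using emeasure_distr[OF cont_meas[OF test1(3) s\<nu>] A] sp\<nu> by (simp add: S_def)
      also have "\<dots> = emeasure T1 S + emeasure T2 S + emeasure T3 S" by (rule e\<nu>[OF S])
      also have "emeasure T1 S = ennreal (1/3) * emeasure (\<mu>2 \<Otimes>\<^sub>M \<mu>3) A"
      proof -
        have "f1 -` S = {(p,z). (snd p, z) \<in> A}" by (auto simp: f1_def S_def)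
        then show ?thesis using eT1[OF S] K2[OF fin12 P3.prob_space_axioms D12(1) s3 fst12(2) D12(6) fm1(2) top3 A] by simp
      qed
      also have "emeasure T2 S = ennreal (1/3) * emeasure (\<mu>2 \<Otimes>\<^sub>M \<mu>3) A"
      proof -
        have "f2 -` S = {(p,z). (snd p, z) \<in> {(a,b). (b,a) \<in> A}}" by (auto simp: f2_def S_def)
        then show ?thesis using eT2[OF S] K2[OF fin13 P2.prob_space_axioms D13(1) s2 fst13(2) D13(6) fm1(3) top3 swp[OF A]]
            K3[OF fm1(3) fm1(2) s3 s2 A] by simp
      qed
      also have "emeasure T3 S = emeasure L23 A"
      proof -
        have "f3 -` S = A \<times> UNIV" by (auto simp: f3_def S_def)
        then show ?thesis using eT3[OF S] K1[OF fin23 P1.prob_space_axioms D23(1) s1 A] by simp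
      qed
      also have "ennreal (1/3) * emeasure (\<mu>2 \<Otimes>\<^sub>M \<mu>3) A + ennreal (1/3) * emeasure (\<mu>2 \<Otimes>\<^sub>M \<mu>3) A + emeasure L23 A = emeasure \<mu>23 A"
        unfolding D23(3)[OF A] Q23.emeasure_eq_measure P23.emeasure_eq_measure
        by (rule arith3(3)) (use ge23 A in \<open>auto simp: Q23.emeasure_eq_measure P23.emeasure_eq_measure\<close>)
      finally show "emeasure (distr \<nu> borel (\<lambda>(x, y, z). (y, z))) A = emeasure \<mu>23 A" .
    qed
  qed
qed

end
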